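(* Let $G=(V,E)$ be a simple, connected graph with maximum degree $\Delta$, and let $V = A \cup B \cup C$ be a partition into pairwise disjoint sets ($C$ possibly empty) satisfying: (1) every $v \in A$ satisfies $d_B(v) \geq d_A(v) + \max\{1, d_C(v)\}$; (2) every $v \in B$ satisfies $d_A(v) \geq d_B(v) + \max\{1, d_C(v)\}$; (3) $d_C(v) = 0$ for all $v \in C$; (4) every $v \in C$ satisfies $d_A(v) = d_B(v)$; (5) $\# E(A \cup B, C) + 2\# E(A,A) + 2\# E(B,B) \leq 2\# E(A,B)$. Then the number of edges between $A \cup C$ and $B$ satisfies $$\# E(A \cup C, B) \geq \left(\frac{1}{2} + \frac{1}{3\Delta}\right)|E|.$$
   Context: For a vertex $v$ and a set $S \subseteq V$, $d_S(v)$ denotes the number of neighbors of $v$ in $S$. For disjoint $X,Y \subseteq V$, $\# E(X,Y)$ is the number of edges with one endpoint in $X$ and the other in $Y$; $\# E(X,X)$ is the number of edges with both endpoints in $X$. *)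

theory Defs
  imports Complex_Main
begin

definition simple_graph :: "'a set \<Rightarrow> 'a set set \<Rightarrow> bool" where
  "simple_graph V E \<longleftrightarrow> finite V \<and> (\<forall>e\<in>E. e \<subseteq> V \<and> card e = 2)"

definition adj :: "'a set set \<Rightarrow> 'a \<Rightarrow> 'a \<Rightarrow> bool" where
  "adj E u v \<longleftrightarrow> {u, v} \<in> E"

definition connected_graph :: "'a set \<Rightarrow> 'a set set \<Rightarrow> bool" where
  "connected_graph V E \<longleftrightarrow> V \<noteq> {} \<and>
     (\<forall>u\<in>V. \<forall>v\<in>V. (u, v) \<in> (rtrancl {(x, y). adj E x y}))"

definition deg_in :: "'a set set \<Rightarrow> 'a set \<Rightarrow> 'a \<Rightarrow> nat" where
  "deg_in E S v = card {u \<in> S. adj E v u}"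

definition degree :: "'a set \<Rightarrow> 'a set set \<Rightarrow> 'a \<Rightarrow> nat" where
  "degree V E v = deg_in E V v"

definition max_degree :: "'a set \<Rightarrow> 'a set set \<Rightarrow> nat" where
  "max_degree V E = Max (degree V E ` V)"

text \<open>Edges with one endpoint in X and the other in Y (for disjoint X, Y),
  or both endpoints in X (when Y = X).\<close>
definition edges_between :: "'a set set \<Rightarrow> 'a set \<Rightarrow> 'a set \<Rightarrow> nat" where
  "edges_between E X Y = card {e \<in> E. \<exists>x\<in>X. \<exists>y\<in>Y. e = {x, y}}"

end

theory Submission
  imports Defs
begin

lemma sum_deg_card:
  assumes "finite X" "finite Y"
  shows "(\<Sum>x\<in>X. deg_in E Y x) = card (SIGMA x:X. {u\<in>Y. adj E x u})"
  using assms by (simp add: deg_in_def)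

lemma eb_disj:
  assumes "finite X" "finite Y" "X \<inter> Y = {}"
  shows "edges_between E X Y = (\<Sum>x\<in>X. deg_in E Y x)"
proof -
  let ?S = "SIGMA x:X. {u\<in>Y. adj E x u}"
  let ?g = "\<lambda>(x,u). {x,u}"
  have img: "{e \<in> E. \<exists>x\<in>X. \<exists>y\<in>Y. e = {x, y}} = ?g ` ?S"
    by (auto simp: adj_def image_iff)
  have "inj_on ?g ?S"
  proof (rule inj_onI)
    fix p q assume "p \<in> ?S" "q \<in> ?S" "?g p = ?g q"
    then obtain a b c d where "p = (a,b)" "q = (c,d)" "a \<in> X" "b \<in> Y" "c \<in> X" "d \<in> Y" "{a,b} = {c,d}"
      by auto
    then show "p = q" using assms(3) unfolding doubleton_eq_iff by blast
  qed
  then have "card (?g ` ?S) = card ?S" by (rule card_image)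
  then show ?thesis unfolding edges_between_def img
    using sum_deg_card[OF assms(1,2)] by simp
qed

lemma eb_self:
  assumes "finite X" "\<forall>e\<in>E. card e = 2"
  shows "2 * edges_between E X X = (\<Sum>x\<in>X. deg_in E X x)"
proof -
  let ?S = "SIGMA x:X. {u\<in>X. adj E x u}"
  let ?g = "\<lambda>(x,u). {x,u}"
  have img: "{e \<in> E. \<exists>x\<in>X. \<exists>y\<in>X. e = {x, y}} = ?g ` ?S"
    by (auto simp: adj_def image_iff)
  have finS: "finite ?S" using assms(1) by auto
  have "card ?S = (\<Sum>p\<in>?S. 1)" by simp
  also have "\<dots> = (\<Sum>y\<in>?g ` ?S. (\<Sum>p\<in>{p. p \<in> ?S \<and> ?g p = y}. 1))"
    by (rule sum.image_gen[OF finS])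
  also have "\<dots> = (\<Sum>y\<in>?g ` ?S. 2)"
  proof (rule sum.cong[OF refl])
    fix y assume "y \<in> ?g ` ?S"
    then obtain x u where xu: "x \<in> X" "u \<in> X" "{x,u} \<in> E" "y = {x,u}"
      by (auto simp: adj_def)
    then have "card {x,u} = 2" using assms(2) by auto
    then have ne: "x \<noteq> u" by auto
    have "{p. p \<in> ?S \<and> ?g p = y} = {(x,u),(u,x)}"
    proof -
      have "{u,x} \<in> E" using xu(3) by (simp add: insert_commute)
      note ux = this
      show ?thesis
      proof (rule set_eqI)
        fix p :: "'a \<times> 'a"
        obtain a b where p: "p = (a,b)" by (cases p)
        have d: "{a,b} = {x,u} \<longleftrightarrow> (a=x \<and> b=u) \<or> (a=u \<and> b=x)" by (rule doubleton_eq_iff)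
        have "p \<in> {p. p \<in> ?S \<and> ?g p = y} \<longleftrightarrow> a \<in> X \<and> b \<in> X \<and> {a,b} \<in> E \<and> {a,b} = {x,u}"
          using p xu(4) unfolding adj_def by simp
        then show "p \<in> {p. p \<in> ?S \<and> ?g p = y} \<longleftrightarrow> p \<in> {(x,u),(u,x)}"
          using d p xu ux by blast
      qed
    qed
    then show "(\<Sum>p\<in>{p. p \<in> ?S \<and> ?g p = y}. 1) = (2::nat)"
      using ne by simp
  qed
  finally have "card ?S = 2 * card (?g ` ?S)" by simp
  then show ?thesis unfolding edges_between_def img
    using sum_deg_card[OF assms(1,1)] by simp
qed

lemma eb_comm: "edges_between E X Y = edges_between E Y X"
  unfolding edges_between_def
proof (rule arg_cong[where f=card])
  have c: "\<And>x y. {x,y} = {y,x}" by (rule insert_commute)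
  show "{e \<in> E. \<exists>x\<in>X. \<exists>y\<in>Y. e = {x, y}} = {e \<in> E. \<exists>x\<in>Y. \<exists>y\<in>X. e = {x, y}}"
    using c by blast
qed

lemma deg_union:
  assumes "finite X" "finite Y" "X \<inter> Y = {}"
  shows "deg_in E (X \<union> Y) v = deg_in E X v + deg_in E Y v"
proof -
  have "{u \<in> X \<union> Y. adj E v u} = {u \<in> X. adj E v u} \<union> {u \<in> Y. adj E v u}" by auto
  then show ?thesis unfolding deg_in_def
    using assms card_Un_disjoint[of "{u \<in> X. adj E v u}" "{u \<in> Y. adj E v u}"] by auto
qed

theorem corollary3:
  fixes V :: "'a set" and E :: "'a set set" and A B C :: "'a set"
  assumes graph: "simple_graph V E"
    and conn: "connected_graph V E"
    and part: "V = A \<union> B \<union> C" "A \<inter> B = {}" "A \<inter> C = {}" "B \<inter> C = {}"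
    and h1: "\<forall>v\<in>A. deg_in E B v \<ge> deg_in E A v + max 1 (deg_in E C v)"
    and h2: "\<forall>v\<in>B. deg_in E A v \<ge> deg_in E B v + max 1 (deg_in E C v)"
    and h3: "\<forall>v\<in>C. deg_in E C v = 0"
    and h4: "\<forall>v\<in>C. deg_in E A v = deg_in E B v"
    and h5: "edges_between E (A \<union> B) C + 2 * edges_between E A A + 2 * edges_between E B B
               \<le> 2 * edges_between E A B"
  shows "real (edges_between E (A \<union> C) B)
           \<ge> (1/2 + 1 / (3 * real (max_degree V E))) * real (card E)"
proof -
  have finV: "finite V" and Ecard: "\<forall>e\<in>E. card e = 2" and Esub: "\<forall>e\<in>E. e \<subseteq> V"
    using graph by (auto simp: simple_graph_def)
  have fA: "finite A" and fB: "finite B" and fC: "finite C"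
    using finV part(1) by auto
  define D where "D = max_degree V E"
  define dA where "dA = deg_in E A"
  define dB where "dB = deg_in E B"
  define dC where "dC = deg_in E C"
  define P where "P = (\<Sum>v\<in>A. dA v)"
  define Q where "Q = (\<Sum>v\<in>A. dB v)"
  define R where "R = (\<Sum>v\<in>A. dC v)"
  define S where "S = (\<Sum>v\<in>B. dA v)"
  define T where "T = (\<Sum>v\<in>B. dB v)"
  define U where "U = (\<Sum>v\<in>B. dC v)"
  define R' where "R' = (\<Sum>v\<in>C. dA v)"
  define U' where "U' = (\<Sum>v\<in>C. dB v)"
  have degsplit: "degree V E v = dA v + dB v + dC v" for v
    unfolding degree_def dA_def dB_def dC_def part(1)
    using fA fB fC part(2-4) by (simp add: deg_union Int_Un_distrib2)
  have QS: "Q = S" unfolding Q_def S_def dA_def dB_def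
    using eb_disj[OF fA fB part(2), of E] eb_disj[OF fB fA, of E] part(2) eb_comm[of E A B]
    by (simp add: Int_commute)
  have RR: "R = R'" unfolding R_def R'_def dA_def dC_def
    using eb_disj[OF fA fC part(3), of E] eb_disj[OF fC fA, of E] part(3) eb_comm[of E A C]
    by (simp add: Int_commute)
  have UU: "U = U'" unfolding U_def U'_def dB_def dC_def
    using eb_disj[OF fB fC part(4), of E] eb_disj[OF fC fB, of E] part(4) eb_comm[of E B C]
    by (simp add: Int_commute)
  have RU': "R' = U'" unfolding R'_def U'_def dA_def dB_def using h4 by simp
  have CC: "(\<Sum>v\<in>C. dC v) = 0" unfolding dC_def using h3 by simp
  have cardE: "card E = edges_between E V V"
  proof -
    have "{e \<in> E. \<exists>x\<in>V. \<exists>y\<in>V. e = {x, y}} = E"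
    proof (rule set_eqI, rule iffI)
      fix e assume "e \<in> E"
      then have "card e = 2" "e \<subseteq> V" using Ecard Esub by auto
      then show "e \<in> {e \<in> E. \<exists>x\<in>V. \<exists>y\<in>V. e = {x, y}}"
        using \<open>e \<in> E\<close> by (auto simp: card_2_iff)
    qed auto
    then show ?thesis unfolding edges_between_def by simp
  qed
  have hs: "2 * card E = (\<Sum>v\<in>V. degree V E v)"
    using eb_self[OF finV Ecard] cardE unfolding degree_def by simp
  also have "\<dots> = (\<Sum>v\<in>A. degree V E v) + (\<Sum>v\<in>B. degree V E v) + (\<Sum>v\<in>C. degree V E v)"
    unfolding part(1) using fA fB fC part(2-4)
    by (simp add: sum.union_disjoint Int_Un_distrib2)
  also have "\<dots> = (P + Q + R) + (S + T + U) + (R' + U' + 0)"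
    unfolding degsplit sum.distrib P_def Q_def R_def S_def T_def U_def R'_def U'_def CC[symmetric]
    by simp
  finally have E2: "2 * card E = P + 2*Q + T + 4*R" using QS RR UU RU' by simp
  have Qa: "Q \<ge> P + card A" and QR: "Q \<ge> P + R"
  proof -
    have "(\<Sum>v\<in>A. dA v + 1) \<le> Q" unfolding Q_def
      by (rule sum_mono) (use h1 in \<open>auto simp: dA_def dB_def\<close>)
    then show "Q \<ge> P + card A" unfolding P_def sum.distrib by simp
    have "(\<Sum>v\<in>A. dA v + dC v) \<le> Q" unfolding Q_def
      by (rule sum_mono) (use h1 in \<open>auto simp: dA_def dB_def dC_def\<close>)
    then show "Q \<ge> P + R" unfolding P_def R_def by (simp add: sum.distrib)
  qed
  have Sb: "S \<ge> T + card B" and SU: "S \<ge> T + U"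
  proof -
    have "(\<Sum>v\<in>B. dB v + 1) \<le> S" unfolding S_def
      by (rule sum_mono) (use h2 in \<open>auto simp: dA_def dB_def\<close>)
    then show "S \<ge> T + card B" unfolding T_def sum.distrib by simp
    have "(\<Sum>v\<in>B. dB v + dC v) \<le> S" unfolding S_def
      by (rule sum_mono) (use h2 in \<open>auto simp: dA_def dB_def dC_def\<close>)
    then show "S \<ge> T + U" unfolding T_def U_def by (simp add: sum.distrib)
  qed
  have degle: "v \<in> V \<Longrightarrow> degree V E v \<le> D" for v
    unfolding D_def max_degree_def using finV by simp
  have DA: "P + Q + R \<le> D * card A"
  proof -
    have "(\<Sum>v\<in>A. degree V E v) \<le> card A * D"
      using sum_bounded_above[of A "degree V E" D] degle part(1) by auto
    then show ?thesis unfolding P_def Q_def R_def degsplit sum.distrib by (simp add: mult.commute)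
  qed
  have DB: "S + T + U \<le> D * card B"
  proof -
    have "(\<Sum>v\<in>B. degree V E v) \<le> card B * D"
      using sum_bounded_above[of B "degree V E" D] degle part(1) by auto
    then show ?thesis unfolding S_def T_def U_def degsplit sum.distrib by (simp add: mult.commute)
  qed
  have D2: "R = 0 \<or> D \<ge> 2"
  proof (cases "R = 0")
    case False
    then have "R' \<noteq> 0" using RR by simp
    then have "\<not> (\<forall>v\<in>C. dA v = 0)" unfolding R'_def using sum.neutral[of C dA] by metis
    then obtain v where v: "v \<in> C" "dA v \<noteq> 0" by blast
    then have "dB v \<noteq> 0" using h4 unfolding dA_def dB_def by simp
    then have "degree V E v \<ge> 2" using v degsplit[of v] by simp
    moreover have "degree V E v \<le> D" using degle v part(1) by simp
    ultimately show ?thesis by simp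
  qed simp
  have lhs: "edges_between E (A \<union> C) B = Q + U'"
  proof -
    have "edges_between E (A \<union> C) B = (\<Sum>v\<in>A \<union> C. dB v)"
      unfolding dB_def using fA fB fC part(2-4) by (intro eb_disj) auto
    also have "\<dots> = Q + U'" unfolding Q_def U'_def using fA fC part(3)
      by (simp add: sum.union_disjoint)
    finally show ?thesis .
  qed
  define Y where "Y = 2 * real Q - real P - real T"
  have Y1: "Y \<ge> real (card A) + real (card B)" unfolding Y_def using Qa Sb QS by linarith
  have Y2: "Y \<ge> 2 * real R" unfolding Y_def using QR SU QS UU RU' RR by linarith
  have key: "2 * (2 * real (card E)) \<le> 3 * real D * Y"
  proof -
    have E2r: "2 * real (card E) = real P + 2 * real Q + real T + 4 * real R"
    proof -
      have "real (2 * card E) = real (P + 2 * Q + T + 4 * R)" using E2 by (simp only:)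
      then show ?thesis by simp
    qed
    have DAr: "real P + real Q + real R \<le> real D * real (card A)"
    proof -
      have "real (P + Q + R) \<le> real (D * card A)" using DA by (simp only: of_nat_le_iff)
      then show ?thesis by simp
    qed
    have DBr: "real Q + real T + real R \<le> real D * real (card B)"
    proof -
      have "real (S + T + U) \<le> real (D * card B)" using DB by (simp only: of_nat_le_iff)
      then show ?thesis using QS UU RU' RR by simp
    qed
    have m1: "real D * (real (card A) + real (card B)) \<le> real D * Y"
      using Y1 by (intro mult_left_mono) auto
    have Y0: "Y \<ge> 0" using Y2 by simp
    show ?thesis
    proof (cases "R = 0")
      case True
      have "0 \<le> real D * Y" using Y0 by simp
      then show ?thesis using E2r DAr DBr m1 True by (simp add: algebra_simps)
    next
      case False
      then have "D \<ge> 2" using D2 by simp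
      then have "2 * (2 * real R) \<le> real D * (2 * real R)"
        by (intro mult_right_mono) auto
      also have "\<dots> \<le> real D * Y" using Y2 by (intro mult_left_mono) auto
      finally show ?thesis using E2r DAr DBr m1 by (simp add: algebra_simps)
    qed
  qed
  have lhsr: "real (edges_between E (A \<union> C) B) = real (card E) / 2 + Y / 4"
  proof -
    have E2r: "2 * real (card E) = real P + 2 * real Q + real T + 4 * real R"
    proof -
      have "real (2 * card E) = real (P + 2 * Q + T + 4 * R)" using E2 by (simp only:)
      then show ?thesis by simp
    qed
    show ?thesis unfolding lhs Y_def using E2r UU RU' RR by (simp add: field_simps)
  qed
  show ?thesis
  proof (cases "D = 0")
    case True
    then show ?thesis using lhsr key Y2 unfolding D_def[symmetric] by simp
  next
    case False
    then have Dp: "real D > 0" by simp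
    have "real (card E) / (3 * real D) \<le> Y / 4"
      using key Dp by (simp add: divide_le_eq field_simps)
    then show ?thesis using lhsr unfolding D_def[symmetric] by (simp add: algebra_simps)
  qed
qed

end
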